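(* Let $X$ be a finite nonempty alphabet and $\mathcal{L}\subseteq 2^{X^*}$ a nontrivial, WP-recursive language family closed under finite unions, finite intersections and complementation. Let $C,A\subseteq X^*$ be recursive languages with $A$ infinite, $A\cap C=\emptyset$, and $A\notin\mathit{cclass}_1(C,\mathcal{L})$. Then there is a recursive language $B\subseteq A$ with $B\in\mathit{ccore}_1(C,\mathcal{L})$.
   Context: $\mathcal{L}$ is nontrivial if $\emptyset,X^*\in\mathcal{L}$ and for all $Q\in\mathcal{L}$ and finite $E\subseteq X^*$ both $Q\cup E\in\mathcal{L}$ and $Q\setminus E\in\mathcal{L}$. $\mathcal{L}$ is WP-recursive if there is a surjection $e:\mathbb{N}_0\to\mathcal{L}$ such that the predicate "$w\in e(i)$" (for $i\in\mathbb{N}_0$, $w\in X^*$) is decidable (uniformly in $i$ and $w$). For $C\subseteq X^*$ and an infinite $A\subseteq X^*\setminus C$: $A\in\mathit{cclass}_1(C,\mathcal{L})$ iff there is $Q\in\mathcal{L}$ with $X^*\setminus Q\in\mathcal{L}$, $C\subseteq Q$ and $A\subseteq X^*\setminus Q$; $B\in\mathit{ccore}_1(C,\mathcal{L})$ iff $B$ is an infinite subset of $X^*\setminus C$ and every infinite $B'\subseteq B$ satisfies $B'\notin\mathit{cclass}_1(C,\mathcal{L})$. *)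

theory Defs
  imports Main "HOL-Library.Nat_Bijection"
begin

datatype recf = Zero | Succ | Proj nat | Comp recf "recf list" | PrimRec recf recf | Minim recf

inductive eval :: "recf \<Rightarrow> nat list \<Rightarrow> nat \<Rightarrow> bool" where
  eval_Zero: "eval Zero xs 0"
| eval_Succ: "eval Succ (x # xs) (Suc x)"
| eval_Proj: "i < length xs \<Longrightarrow> eval (Proj i) xs (xs ! i)"
| eval_Comp: "list_all2 (\<lambda>g y. eval g xs y) gs ys \<Longrightarrow> eval f ys y \<Longrightarrow> eval (Comp f gs) xs y"
| eval_Pr0: "eval f xs y \<Longrightarrow> eval (PrimRec f g) (0 # xs) y"
| eval_PrS: "eval (PrimRec f g) (n # xs) y \<Longrightarrow> eval g (n # y # xs) z
             \<Longrightarrow> eval (PrimRec f g) (Suc n # xs) z"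
| eval_Mn: "eval f (n # xs) 0 \<Longrightarrow> (\<forall>m<n. \<exists>k. eval f (m # xs) (Suc k))
             \<Longrightarrow> eval (Minim f) xs n"

definition computable1 :: "(nat \<Rightarrow> nat) \<Rightarrow> bool" where
  "computable1 f \<longleftrightarrow> (\<exists>r. \<forall>x. eval r [x] (f x))"

definition computable2 :: "(nat \<Rightarrow> nat \<Rightarrow> nat) \<Rightarrow> bool" where
  "computable2 f \<longleftrightarrow> (\<exists>r. \<forall>x y. eval r [x, y] (f x y))"

section \<open>Words over the alphabet X = {0..<k}\<close>

definition words :: "nat \<Rightarrow> nat list set" where
  "words k = lists {0..<k}"

definition recursive_lang :: "nat list set \<Rightarrow> bool" where
  "recursive_lang L \<longleftrightarrow> computable1 (\<lambda>n. if list_decode n \<in> L then 1 else 0)"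

definition nontrivial :: "nat \<Rightarrow> nat list set set \<Rightarrow> bool" where
  "nontrivial k \<L> \<longleftrightarrow> {} \<in> \<L> \<and> words k \<in> \<L> \<and>
     (\<forall>Q\<in>\<L>. \<forall>E. finite E \<and> E \<subseteq> words k \<longrightarrow> Q \<union> E \<in> \<L> \<and> Q - E \<in> \<L>)"

definition WP_recursive :: "nat list set set \<Rightarrow> bool" where
  "WP_recursive \<L> \<longleftrightarrow> (\<exists>e :: nat \<Rightarrow> nat list set. range e = \<L> \<and>
     computable2 (\<lambda>i n. if list_decode n \<in> e i then 1 else 0))"

definition cclass1 :: "nat \<Rightarrow> nat list set \<Rightarrow> nat list set set \<Rightarrow> nat list set set" where
  "cclass1 k C \<L> = {A. infinite A \<and> A \<subseteq> words k - C \<and>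
     (\<exists>Q\<in>\<L>. words k - Q \<in> \<L> \<and> C \<subseteq> Q \<and> A \<subseteq> words k - Q)}"

definition ccore1 :: "nat \<Rightarrow> nat list set \<Rightarrow> nat list set set \<Rightarrow> nat list set set" where
  "ccore1 k C \<L> = {B. infinite B \<and> B \<subseteq> words k - C \<and>
     (\<forall>B'. B' \<subseteq> B \<and> infinite B' \<longrightarrow> B' \<notin> cclass1 k C \<L>)}"

end

theory Submission
  imports Defs "HOL-Library.Infinite_Set"
begin


definition rc :: "nat \<Rightarrow> (nat list \<Rightarrow> nat) \<Rightarrow> bool" where
  "rc n f \<longleftrightarrow> (\<exists>r. \<forall>xs. length xs = n \<longrightarrow> eval r xs (f xs))"

lemma rc_cong: "rc n f \<Longrightarrow> (\<And>xs. length xs = n \<Longrightarrow> f xs = g xs) \<Longrightarrow> rc n g"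
  unfolding rc_def by metis

fun cnst :: "nat \<Rightarrow> recf" where
  "cnst 0 = Zero" | "cnst (Suc c) = Comp Succ [cnst c]"

lemma eval_cnst: "eval (cnst c) xs c"
proof (induction c)
  case 0 then show ?case by (simp add: eval_Zero)
next
  case (Suc c)
  show ?case by simp (rule eval_Comp[where ys="[c]"], simp add: Suc, rule eval_Succ)
qed

lemma rc_const: "rc n (\<lambda>_. c)"
  unfolding rc_def using eval_cnst by blast

lemma rc_proj: "i < n \<Longrightarrow> rc n (\<lambda>xs. xs ! i)"
  unfolding rc_def by (metis eval_Proj)

lemma rc_succ: assumes "rc n f" shows "rc n (\<lambda>xs. Suc (f xs))"
proof -
  obtain r where r: "\<forall>xs. length xs = n \<longrightarrow> eval r xs (f xs)" using assms rc_def by blast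
  have "eval (Comp Succ [r]) xs (Suc (f xs))" if "length xs = n" for xs
    by (rule eval_Comp[where ys="[f xs]"]) (simp_all add: r that eval_Succ)
  then show ?thesis unfolding rc_def by blast
qed

lemma rc_list: "\<forall>g\<in>set gs. rc n g \<Longrightarrow>
   \<exists>rs. list_all2 (\<lambda>r g. \<forall>xs. length xs = n \<longrightarrow> eval r xs (g xs)) rs gs"
proof (induction gs)
  case Nil then show ?case by auto
next
  case (Cons g gs)
  then obtain rs where rs: "list_all2 (\<lambda>r g. \<forall>xs. length xs = n \<longrightarrow> eval r xs (g xs)) rs gs" by auto
  from Cons.prems obtain r where "\<forall>xs. length xs = n \<longrightarrow> eval r xs (g xs)" unfolding rc_def by auto
  with rs show ?case by (intro exI[of _ "r # rs"]) auto
qed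

lemma rc_comp: assumes "rc (length gs) f" "\<forall>g\<in>set gs. rc n g"
  shows "rc n (\<lambda>xs. f (map (\<lambda>g. g xs) gs))"
proof -
  obtain rf where rf: "\<forall>xs. length xs = length gs \<longrightarrow> eval rf xs (f xs)" using assms(1) rc_def by blast
  obtain rs where rs: "list_all2 (\<lambda>r g. \<forall>xs. length xs = n \<longrightarrow> eval r xs (g xs)) rs gs"
    using rc_list assms(2) by blast
  have "eval (Comp rf rs) xs (f (map (\<lambda>g. g xs) gs))" if "length xs = n" for xs
  proof (rule eval_Comp)
    show "list_all2 (\<lambda>g y. eval g xs y) rs (map (\<lambda>g. g xs) gs)"
      unfolding list_all2_map2 by (rule list_all2_mono[OF rs]) (simp add: that)
    show "eval rf (map (\<lambda>g. g xs) gs) (f (map (\<lambda>g. g xs) gs))" using rf by simp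
  qed
  then show ?thesis unfolding rc_def by (intro exI[of _ "Comp rf rs"]) blast
qed

lemma rc_prim: assumes "rc n f" "rc (Suc (Suc n)) g"
  shows "rc (Suc n) (\<lambda>xs. rec_nat (f (tl xs)) (\<lambda>m y. g (m # y # tl xs)) (hd xs))"
proof -
  obtain rf where rf: "\<forall>xs. length xs = n \<longrightarrow> eval rf xs (f xs)" using assms(1) rc_def by blast
  obtain rg where rg: "\<forall>xs. length xs = Suc (Suc n) \<longrightarrow> eval rg xs (g xs)" using assms(2) rc_def by blast
  have *: "eval (PrimRec rf rg) (m # ys) (rec_nat (f ys) (\<lambda>m y. g (m # y # ys)) m)" if "length ys = n" for m ys
  proof (induction m)
    case 0 then show ?case using rf that by (simp add: eval_Pr0)
  next
    case (Suc m) then show ?case using rg that by (auto intro: eval_PrS)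
  qed
  have "eval (PrimRec rf rg) xs (rec_nat (f (tl xs)) (\<lambda>m y. g (m # y # tl xs)) (hd xs))"
    if "length xs = Suc n" for xs
    using that *[of "tl xs" "hd xs"] by (cases xs) auto
  then show ?thesis unfolding rc_def by blast
qed

lemma rc_min: assumes "rc (Suc n) f" "\<And>xs. length xs = n \<Longrightarrow> \<exists>m. f (m#xs) = 0"
  shows "rc n (\<lambda>xs. LEAST m. f (m#xs) = 0)"
proof -
  obtain rf where rf: "\<forall>xs. length xs = Suc n \<longrightarrow> eval rf xs (f xs)" using assms(1) rc_def by blast
  have "eval (Minim rf) xs (LEAST m. f (m#xs) = 0)" if "length xs = n" for xs
  proof (rule eval_Mn)
    have "f ((LEAST m. f (m#xs) = 0) # xs) = 0" using assms(2)[OF that] by (rule LeastI_ex)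
    then show "eval rf ((LEAST m. f (m#xs) = 0) # xs) 0" using rf that by (metis length_Cons)
    show "\<forall>m<(LEAST m. f (m#xs) = 0). \<exists>k. eval rf (m # xs) (Suc k)"
    proof (intro allI impI)
      fix m assume "m < (LEAST m. f (m#xs) = 0)"
      then have "f (m#xs) \<noteq> 0" using not_less_Least by blast
      then have "f (m#xs) = Suc (f (m#xs) - 1)" by simp
      then show "\<exists>k. eval rf (m # xs) (Suc k)" using rf that by (metis length_Cons)
    qed
  qed
  then show ?thesis unfolding rc_def by blast
qed

lemma len1: "length xs = 1 \<Longrightarrow> xs = [xs!0]" by (cases xs) auto
lemma len2: "length xs = 2 \<Longrightarrow> xs = [xs!0, xs!1]"
  by (cases xs; cases "tl xs") (auto simp: numeral_2_eq_2)

lemma rc_comp2: assumes "rc 2 h" "rc n f" "rc n g" shows "rc n (\<lambda>xs. h [f xs, g xs])"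
  using rc_comp[of "[f,g]" h n] assms by (simp add: numeral_2_eq_2)

lemma rc_comp1: assumes "rc 1 h" "rc n f" shows "rc n (\<lambda>xs. h [f xs])"
  using rc_comp[of "[f]" h n] assms by simp

lemma len2': "length xs = Suc 1 \<Longrightarrow> \<exists>a b. xs = [a,b]"
  by (metis len2 Suc_1)

lemma rc_add2: "rc 2 (\<lambda>xs. xs!0 + xs!1)"
proof -
  have R: "rc (Suc 1) (\<lambda>xs. rec_nat ((\<lambda>ys. ys!0) (tl xs)) (\<lambda>m y. (\<lambda>zs. Suc (zs!1)) (m # y # tl xs)) (hd xs))"
    by (rule rc_prim) (auto intro: rc_proj rc_succ)
  have E: "rec_nat b (\<lambda>m y. Suc y) a = a + b" for a b :: nat by (induction a) auto
  have "rc (Suc 1) (\<lambda>xs. xs!0 + xs!1)"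
  proof (rule rc_cong[OF R])
    fix xs :: "nat list" assume "length xs = Suc 1"
    then obtain a b where "xs = [a,b]" using len2' by blast
    then show "rec_nat ((\<lambda>ys. ys!0) (tl xs)) (\<lambda>m y. (\<lambda>zs. Suc (zs!1)) (m # y # tl xs)) (hd xs) = xs!0 + xs!1"
      using E by simp
  qed
  then show ?thesis by (simp add: numeral_2_eq_2)
qed

lemma rc_add: "rc n f \<Longrightarrow> rc n g \<Longrightarrow> rc n (\<lambda>xs. f xs + g xs)"
  using rc_comp2[OF rc_add2] by simp

lemma rc_mult2: "rc 2 (\<lambda>xs. xs!0 * xs!1)"
proof -
  have R: "rc (Suc 1) (\<lambda>xs. rec_nat ((\<lambda>ys. 0) (tl xs)) (\<lambda>m y. (\<lambda>zs. zs!1 + zs!2) (m # y # tl xs)) (hd xs))"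
    by (rule rc_prim) (auto intro!: rc_const rc_add rc_proj)
  have E: "rec_nat 0 (\<lambda>m y. y + b) a = a * b" for a b :: nat by (induction a) auto
  have "rc (Suc 1) (\<lambda>xs. xs!0 * xs!1)"
  proof (rule rc_cong[OF R])
    fix xs :: "nat list" assume "length xs = Suc 1"
    then obtain a b where "xs = [a,b]" using len2' by blast
    then show "rec_nat ((\<lambda>ys. 0) (tl xs)) (\<lambda>m y. (\<lambda>zs. zs!1 + zs!2) (m # y # tl xs)) (hd xs) = xs!0 * xs!1"
      using E by simp
  qed
  then show ?thesis by (simp add: numeral_2_eq_2)
qed

lemma rc_mult: "rc n f \<Longrightarrow> rc n g \<Longrightarrow> rc n (\<lambda>xs. f xs * g xs)"
  using rc_comp2[OF rc_mult2] by simp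

lemma rc_pred1: "rc 1 (\<lambda>xs. xs!0 - 1)"
proof -
  have R: "rc (Suc 0) (\<lambda>xs. rec_nat ((\<lambda>ys. 0) (tl xs)) (\<lambda>m y. (\<lambda>zs. zs!0) (m # y # tl xs)) (hd xs))"
    by (rule rc_prim) (auto intro!: rc_const rc_proj)
  have E: "rec_nat 0 (\<lambda>m y. m) a = a - 1" for a :: nat by (induction a) auto
  have "rc (Suc 0) (\<lambda>xs. xs!0 - 1)"
  proof (rule rc_cong[OF R])
    fix xs :: "nat list" assume "length xs = Suc 0"
    then obtain a where "xs = [a]" by (metis One_nat_def len1)
    then show "rec_nat ((\<lambda>ys. 0) (tl xs)) (\<lambda>m y. (\<lambda>zs. zs!0) (m # y # tl xs)) (hd xs) = xs!0 - 1"
      using E by simp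
  qed
  then show ?thesis by (simp add: numeral_2_eq_2)
qed

lemma rc_monus2: "rc 2 (\<lambda>xs. xs!1 - xs!0)"
proof -
  have G: "rc (Suc (Suc 1)) (\<lambda>zs. [zs!1] ! 0 - 1)"
    by (rule rc_comp1[OF rc_pred1 rc_proj]) simp
  have R: "rc (Suc 1) (\<lambda>xs. rec_nat ((\<lambda>ys. ys!0) (tl xs)) (\<lambda>m y. (\<lambda>zs. [zs!1] ! 0 - 1) (m # y # tl xs)) (hd xs))"
    by (rule rc_prim[OF _ G]) (auto intro!: rc_proj)
  have E: "rec_nat b (\<lambda>m y. y - 1) a = b - a" for a b :: nat by (induction a) auto
  have "rc (Suc 1) (\<lambda>xs. xs!1 - xs!0)"
  proof (rule rc_cong[OF R])
    fix xs :: "nat list" assume "length xs = Suc 1"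
    then obtain a b where "xs = [a,b]" using len2' by blast
    then show "rec_nat ((\<lambda>ys. ys!0) (tl xs)) (\<lambda>m y. (\<lambda>zs. [zs!1] ! 0 - 1) (m # y # tl xs)) (hd xs) = xs!1 - xs!0"
      using E by simp
  qed
  then show ?thesis by (simp add: numeral_2_eq_2)
qed

lemma rc_diff: "rc n f \<Longrightarrow> rc n g \<Longrightarrow> rc n (\<lambda>xs. f xs - g xs)"
  using rc_comp2[OF rc_monus2, of n g f] by simp

definition rp :: "nat \<Rightarrow> (nat list \<Rightarrow> bool) \<Rightarrow> bool" where
  "rp n P \<longleftrightarrow> rc n (\<lambda>xs. if P xs then 1 else 0)"

lemma rp_cong: assumes "rp n P" "\<And>xs. length xs = n \<Longrightarrow> P xs = Q xs" shows "rp n Q"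
  using assms(1) unfolding rp_def by (rule rc_cong) (simp add: assms(2))

lemma rp_less: assumes "rc n f" "rc n g" shows "rp n (\<lambda>xs. f xs < g xs)"
proof -
  have "rc n (\<lambda>xs. 1 - (1 - (g xs - f xs)))"
    using assms by (intro rc_diff rc_const)
  then show ?thesis unfolding rp_def by (rule rc_cong) auto
qed

lemma rp_not: assumes "rp n P" shows "rp n (\<lambda>xs. \<not> P xs)"
proof -
  have "rc n (\<lambda>xs. 1 - (if P xs then 1 else 0))"
    using assms unfolding rp_def by (intro rc_diff rc_const)
  then show ?thesis unfolding rp_def by (rule rc_cong) auto
qed

lemma rp_and: assumes "rp n P" "rp n Q" shows "rp n (\<lambda>xs. P xs \<and> Q xs)"
proof -
  have "rc n (\<lambda>xs. (if P xs then 1 else 0) * (if Q xs then 1 else 0))"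
    using assms unfolding rp_def by (intro rc_mult)
  then show ?thesis unfolding rp_def by (rule rc_cong) auto
qed

lemma rp_or: assumes "rp n P" "rp n Q" shows "rp n (\<lambda>xs. P xs \<or> Q xs)"
  using rp_not[OF rp_and[OF rp_not[OF assms(1)] rp_not[OF assms(2)]]] by simp

lemma rp_eq: assumes "rc n f" "rc n g" shows "rp n (\<lambda>xs. f xs = g xs)"
  using rp_and[OF rp_not[OF rp_less[OF assms]] rp_not[OF rp_less[OF assms(2,1)]]]
  by (rule rp_cong) auto

lemma rp_comp: assumes "rp (length gs) P" "\<forall>g\<in>set gs. rc n g"
  shows "rp n (\<lambda>xs. P (map (\<lambda>g. g xs) gs))"
  using rc_comp[OF assms[unfolded rp_def]] unfolding rp_def .

lemma map_nth_drop2: "length zs = Suc (Suc n) \<Longrightarrow> map (nth zs) [2..<Suc (Suc n)] = drop 2 zs"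
  by (rule nth_equalityI) (simp_all del: upt_Suc add: nth_upt)

lemma rp_bex: assumes "rp (Suc n) P"
  shows "rp (Suc n) (\<lambda>xs. \<exists>c<hd xs. P (c # tl xs))"
proof -
  let ?gs = "map (\<lambda>i zs. zs ! i) (0 # [2..<n+2])"
  have L: "rp (length ?gs) P" using assms by (simp del: upt_Suc)
  have "\<forall>g\<in>set ?gs. rc (Suc (Suc n)) g" by (auto intro!: rc_proj)
  then have "rp (Suc (Suc n)) (\<lambda>zs. P (map (\<lambda>g. g zs) ?gs))"
    by (rule rp_comp[OF L])
  then have "rp (Suc (Suc n)) (\<lambda>zs. P (zs ! 0 # drop 2 zs))"
    by (rule rp_cong) (simp del: upt_Suc add: map_nth_drop2 comp_def)
  then have "rp (Suc (Suc n)) (\<lambda>zs. 0 < zs ! 1 \<or> P (zs ! 0 # drop 2 zs))"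
    by (intro rp_or rp_less rc_const rc_proj) auto
  then have R: "rc (Suc n) (\<lambda>xs. rec_nat 0 (\<lambda>m y. (\<lambda>zs. if 0 < zs ! 1 \<or> P (zs ! 0 # drop 2 zs) then 1 else 0) (m # y # tl xs)) (hd xs))"
    unfolding rp_def by (intro rc_prim rc_const)
  have E: "rec_nat (0::nat) (\<lambda>m y. if 0 < y \<or> P (m # t) then 1 else 0) a = (if \<exists>c<a. P (c # t) then 1 else 0)"
    for a :: nat and t by (induction a) (auto simp: less_Suc_eq)
  show ?thesis unfolding rp_def by (rule rc_cong[OF R]) (simp add: E)
qed

lemma rp_min: assumes "rp (Suc n) P" "\<And>xs. length xs = n \<Longrightarrow> \<exists>m. P (m#xs)"
  shows "rc n (\<lambda>xs. LEAST m. P (m#xs))"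
proof -
  have R: "rc (Suc n) (\<lambda>xs. 1 - (if P xs then 1 else 0::nat))"
    using assms(1) unfolding rp_def by (intro rc_diff rc_const)
  have E: "\<And>xs. length xs = n \<Longrightarrow> \<exists>m. (\<lambda>xs. 1 - (if P xs then 1 else 0::nat)) (m#xs) = 0"
    using assms(2) by auto
  have "rc n (\<lambda>xs. LEAST m. (\<lambda>xs. 1 - (if P xs then 1 else 0::nat)) (m#xs) = 0)"
    by (rule rc_min[OF R E])
  then show ?thesis by (rule rc_cong) simp
qed

lemma rp_of1: "computable1 F \<Longrightarrow> rc 1 (\<lambda>xs. F (xs!0))"
  unfolding computable1_def rc_def by (metis len1)
lemma rp_of2: "computable2 F \<Longrightarrow> rc 2 (\<lambda>xs. F (xs!0) (xs!1))"
  unfolding computable2_def rc_def by (metis len2)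



lemma rp_cong': "rp n P \<Longrightarrow> n = m \<Longrightarrow> (\<And>xs. length xs = m \<Longrightarrow> P xs = Q xs) \<Longrightarrow> rp m Q"
  using rp_cong by blast
lemma rc_cong': "rc n f \<Longrightarrow> n = m \<Longrightarrow> (\<And>xs. length xs = m \<Longrightarrow> f xs = g xs) \<Longrightarrow> rc m g"
  using rc_cong by blast


lemma rp1_sub: "rp 1 (\<lambda>xs. P (xs!0)) \<Longrightarrow> rc n f \<Longrightarrow> rp n (\<lambda>xs. P (f xs))"
  using rp_comp[of "[f]" "\<lambda>xs. P (xs!0)" n] by simp
lemma rp2_sub: "rp 2 (\<lambda>xs. P (xs!0) (xs!1)) \<Longrightarrow> rc n f \<Longrightarrow> rc n g \<Longrightarrow> rp n (\<lambda>xs. P (f xs) (g xs))"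
  using rp_comp[of "[f,g]" "\<lambda>xs. P (xs!0) (xs!1)" n] by (simp add: numeral_2_eq_2)
lemma rp3_sub: "rp 3 (\<lambda>xs. P (xs!0) (xs!1) (xs!2)) \<Longrightarrow> rc n f \<Longrightarrow> rc n g \<Longrightarrow> rc n h \<Longrightarrow>
   rp n (\<lambda>xs. P (f xs) (g xs) (h xs))"
  using rp_comp[of "[f,g,h]" "\<lambda>xs. P (xs!0) (xs!1) (xs!2)" n] by (simp add: numeral_eq_Suc)
lemma rp4_sub: "rp 4 (\<lambda>xs. P (xs!0) (xs!1) (xs!2) (xs!3)) \<Longrightarrow> rc n f \<Longrightarrow> rc n g \<Longrightarrow> rc n h \<Longrightarrow> rc n k \<Longrightarrow>
   rp n (\<lambda>xs. P (f xs) (g xs) (h xs) (k xs))"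
  using rp_comp[of "[f,g,h,k]" "\<lambda>xs. P (xs!0) (xs!1) (xs!2) (xs!3)" n] by (simp add: numeral_eq_Suc)
lemma rc1_sub: "rc 1 (\<lambda>xs. F (xs!0)) \<Longrightarrow> rc n f \<Longrightarrow> rc n (\<lambda>xs. F (f xs))"
  using rc_comp[of "[f]" "\<lambda>xs. F (xs!0)" n] by simp
lemma rc2_sub: "rc 2 (\<lambda>xs. F (xs!0) (xs!1)) \<Longrightarrow> rc n f \<Longrightarrow> rc n g \<Longrightarrow> rc n (\<lambda>xs. F (f xs) (g xs))"
  using rc_comp[of "[f,g]" "\<lambda>xs. F (xs!0) (xs!1)" n] by (simp add: numeral_2_eq_2)

lemmas LS = numeral_eq_Suc length_Suc_conv One_nat_def

locale constr =
  fixes a c :: "nat \<Rightarrow> bool" and E :: "nat \<Rightarrow> nat \<Rightarrow> bool"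
begin

definition bad where "bad i s \<longleftrightarrow> (\<exists>x<s. c x \<and> \<not> E i x)"
definition ok where "ok n s w \<longleftrightarrow> a w \<and> (\<forall>i<Suc n. bad i s \<or> E i w)"
definition stg where "stg n p = (LEAST s. \<exists>w<s. p < w \<and> ok n s w)"
definition nxt where "nxt n p = (LEAST w. p < w \<and> ok n (stg n p) w)"
primrec bs where "bs 0 = nxt 0 0" | "bs (Suc m) = nxt (Suc m) (bs m)"

lemma bad_mono: "bad i s \<Longrightarrow> s \<le> s' \<Longrightarrow> bad i s'"
  unfolding bad_def by (meson less_le_trans)

lemma s0_ex: "\<exists>s0. \<forall>i\<le>n. (\<exists>x. c x \<and> \<not> E i x) \<longrightarrow> bad i s0"
proof (induction n)
  case 0
  show ?case
  proof (cases "\<exists>x. c x \<and> \<not> E 0 x")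
    case True then obtain x where "c x \<and> \<not> E 0 x" by blast
    then show ?thesis by (intro exI[of _ "Suc x"]) (auto simp: bad_def)
  qed auto
next
  case (Suc n)
  then obtain s0 where s0: "\<forall>i\<le>n. (\<exists>x. c x \<and> \<not> E i x) \<longrightarrow> bad i s0" by blast
  obtain s1 where s1: "(\<exists>x. c x \<and> \<not> E (Suc n) x) \<longrightarrow> bad (Suc n) s1"
    by (metis bad_def lessI)
  show ?case
    by (rule exI[of _ "max s0 s1"]) (metis bad_mono le_Suc_eq max.cobounded1 max.cobounded2 s0 s1)
qed

context
  assumes inf: "\<And>n. infinite {w. a w \<and> (\<forall>i\<le>n. (\<forall>x. c x \<longrightarrow> E i x) \<longrightarrow> E i w)}"
begin

lemma found_ex: "\<exists>s. \<exists>w<s. p < w \<and> ok n s w"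
proof -
  obtain s0 where s0: "\<forall>i\<le>n. (\<exists>x. c x \<and> \<not> E i x) \<longrightarrow> bad i s0" using s0_ex by blast
  obtain w where w: "p < w" "a w" "\<forall>i\<le>n. (\<forall>x. c x \<longrightarrow> E i x) \<longrightarrow> E i w"
    using inf[of n] unfolding infinite_nat_iff_unbounded by blast
  have "ok n (max s0 (Suc w)) w"
    unfolding ok_def using w s0 bad_mono by (metis less_Suc_eq_le max.cobounded1)
  moreover have "w < max s0 (Suc w)" by simp
  ultimately show ?thesis using w(1) by blast
qed

lemma nxt_prop: "p < nxt n p \<and> ok n (stg n p) (nxt n p)"
proof -
  have "\<exists>w<stg n p. p < w \<and> ok n (stg n p) w"
    unfolding stg_def using found_ex by (rule LeastI_ex)
  then have "\<exists>w. p < w \<and> ok n (stg n p) w" by blast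
  then show ?thesis unfolding nxt_def by (rule LeastI_ex)
qed

lemma bs_smono: "strict_mono bs"
  unfolding strict_mono_Suc_iff by (simp add: nxt_prop)

lemma bs_ok: "\<exists>s. ok m s (bs m)"
  by (cases m) (auto intro: nxt_prop[THEN conjunct2])

lemma bs_a: "a (bs m)"
  using bs_ok ok_def by blast

lemma bs_E: "\<forall>x. c x \<longrightarrow> E i x \<Longrightarrow> i \<le> m \<Longrightarrow> E i (bs m)"
  using bs_ok[of m] unfolding ok_def bad_def by (meson le_imp_less_Suc)

lemma range_bs: "x \<in> range bs \<longleftrightarrow> (\<exists>m<Suc x. bs m = x)"
proof -
  have "\<forall>m. m \<le> bs m"
  proof
    fix m show "m \<le> bs m"
    proof (induction m)
      case (Suc m) then show ?case using nxt_prop[of "bs m" "Suc m"] by simp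
    qed simp
  qed
  note mono = this
  show ?thesis
  proof
    assume "x \<in> range bs"
    then obtain m where "x = bs m" by blast
    then show "\<exists>m<Suc x. bs m = x" using mono by (metis less_Suc_eq_le)
  next
    assume "\<exists>m<Suc x. bs m = x"
    then show "x \<in> range bs" by blast
  qed
qed

context
  assumes ra: "rp 1 (\<lambda>xs. a (xs!0))" and rcc: "rp 1 (\<lambda>xs. c (xs!0))"
    and rE: "rp 2 (\<lambda>xs. E (xs!0) (xs!1))"
begin

lemma rp_bad: "rp 2 (\<lambda>xs. bad (xs!0) (xs!1))"
proof -
  have R0: "rp (Suc 1) (\<lambda>ys. c (ys!0) \<and> \<not> E (ys!1) (ys!0))"
    by (auto intro!: rp_and rp_not rp1_sub[OF rcc] rp2_sub[OF rE] rc_proj)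
  have "rp 2 (\<lambda>xs. bad (xs!1) (xs!0))"
    by (rule rp_cong'[OF rp_bex[OF R0]]) (auto simp: LS bad_def)
  then show ?thesis
    using rp2_sub[of "\<lambda>u v. bad v u" 2 "\<lambda>xs. xs!1" "\<lambda>xs. xs!0"] by (simp add: rc_proj)
qed

lemma rp_ok: "rp 3 (\<lambda>xs. ok (xs!0) (xs!1) (xs!2))"
proof -
  have R0: "rp (Suc 2) (\<lambda>ys. \<not> bad (ys!0) (ys!1) \<and> \<not> E (ys!0) (ys!2))"
    by (auto intro!: rp_and rp_not rp2_sub[OF rp_bad] rp2_sub[OF rE] rc_proj)
  have R: "rp 3 (\<lambda>xs. \<exists>i<xs!0. \<not> bad i (xs!1) \<and> \<not> E i (xs!2))"
    by (rule rp_cong'[OF rp_bex[OF R0]]) (auto simp: LS)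
  have R': "rp 3 (\<lambda>xs. \<exists>i<Suc (xs!0). \<not> bad i (xs!1) \<and> \<not> E i (xs!2))"
    using rp3_sub[of "\<lambda>u s w. \<exists>i<u. \<not> bad i s \<and> \<not> E i w" 3 "\<lambda>xs. Suc (xs!0)" "\<lambda>xs. xs!1" "\<lambda>xs. xs!2"] R
    by (simp add: rc_proj rc_succ)
  have "rp 3 (\<lambda>xs. a (xs!2) \<and> \<not> (\<exists>i<Suc (xs!0). \<not> bad i (xs!1) \<and> \<not> E i (xs!2)))"
    by (intro rp_and rp_not R' rp1_sub[OF ra] rc_proj) simp
  then show ?thesis by (rule rp_cong) (auto simp: ok_def)
qed

lemma rc_stg: "rc 2 (\<lambda>xs. stg (xs!0) (xs!1))"
proof -
  have R0: "rp (Suc 3) (\<lambda>ys. ys!3 < ys!0 \<and> ok (ys!2) (ys!1) (ys!0))"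
    by (auto intro!: rp_and rp_less rp3_sub[OF rp_ok] rc_proj)
  have R: "rp 4 (\<lambda>xs. \<exists>w<xs!0. xs!3 < w \<and> ok (xs!2) (xs!1) w)"
    by (rule rp_cong'[OF rp_bex[OF R0]]) (auto simp: LS)
  have R1: "rp (Suc 2) (\<lambda>xs. \<exists>w<xs!0. xs!2 < w \<and> ok (xs!1) (xs!0) w)"
    using rp4_sub[of "\<lambda>b s n p. \<exists>w<b. p < w \<and> ok n s w" "Suc 2" "\<lambda>xs. xs!0" "\<lambda>xs. xs!0" "\<lambda>xs. xs!1" "\<lambda>xs. xs!2"] R
    by (simp add: rc_proj)
  show ?thesis
    by (rule rc_cong'[OF rp_min[OF R1]]) (auto simp: LS stg_def found_ex)
qed

lemma rc_nxt: "rc 2 (\<lambda>xs. nxt (xs!0) (xs!1))"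
proof -
  have R0: "rp (Suc 2) (\<lambda>ys. ys!2 < ys!0 \<and> ok (ys!1) (stg (ys!1) (ys!2)) (ys!0))"
    by (auto intro!: rp_and rp_less rp3_sub[OF rp_ok] rc2_sub[OF rc_stg] rc_proj)
  show ?thesis
    by (rule rc_cong'[OF rp_min[OF R0]]) (use nxt_prop in \<open>auto simp: LS nxt_def\<close>)
qed

lemma rc_bs: "rc 1 (\<lambda>xs. bs (xs!0))"
proof -
  have G: "rc (Suc (Suc 0)) (\<lambda>zs. nxt (Suc (zs!0)) (zs!1))"
    by (rule rc2_sub[OF rc_nxt]) (auto intro: rc_succ rc_proj)
  have E: "rec_nat (nxt 0 0) (\<lambda>m y. nxt (Suc m) y) m = bs m" for m by (induction m) auto
  show ?thesis by (rule rc_cong'[OF rc_prim[OF rc_const[of 0 "nxt 0 0"] G]]) (auto simp: LS E)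
qed

lemma rp_range: "rp 1 (\<lambda>xs. xs!0 \<in> range bs)"
proof -
  have R0: "rp (Suc 1) (\<lambda>ys. bs (ys!0) = ys!1)"
    by (auto intro!: rp_eq rc1_sub[OF rc_bs] rc_proj)
  have R: "rp 2 (\<lambda>xs. \<exists>m<xs!0. bs m = xs!1)"
    by (rule rp_cong'[OF rp_bex[OF R0]]) (auto simp: LS)
  have "rp 1 (\<lambda>xs. \<exists>m<Suc (xs!0). bs m = xs!0)"
    using rp2_sub[of "\<lambda>u x. \<exists>m<u. bs m = x" 1 "\<lambda>xs. Suc (xs!0)" "\<lambda>xs. xs!0"] R
    by (simp add: rc_proj rc_succ)
  then show ?thesis by (rule rp_cong) (simp add: range_bs)
qed

end
end
end



theorem theorem5p3:
  fixes k :: nat and \<L> :: "nat list set set" and C A :: "nat list set"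
  assumes "k \<ge> 1"
    and "\<L> \<subseteq> Pow (words k)"
    and "nontrivial k \<L>"
    and "WP_recursive \<L>"
    and "\<And>Q1 Q2. Q1 \<in> \<L> \<Longrightarrow> Q2 \<in> \<L> \<Longrightarrow> Q1 \<union> Q2 \<in> \<L>"
    and "\<And>Q1 Q2. Q1 \<in> \<L> \<Longrightarrow> Q2 \<in> \<L> \<Longrightarrow> Q1 \<inter> Q2 \<in> \<L>"
    and "\<And>Q. Q \<in> \<L> \<Longrightarrow> words k - Q \<in> \<L>"
    and "C \<subseteq> words k" and "A \<subseteq> words k"
    and "recursive_lang C" and "recursive_lang A"
    and "infinite A" and "A \<inter> C = {}"
    and "A \<notin> cclass1 k C \<L>"
  shows "\<exists>B. B \<subseteq> A \<and> recursive_lang B \<and> B \<in> ccore1 k C \<L>"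
proof -
  obtain e where e_range: "range e = \<L>"
    and e_comp: "computable2 (\<lambda>i n. if list_decode n \<in> e i then 1 else 0)"
    using assms(4) unfolding WP_recursive_def by blast
  define a where "a = (\<lambda>x. list_decode x \<in> A)"
  define c where "c = (\<lambda>x. list_decode x \<in> C)"
  define E where "E = (\<lambda>i x. list_decode x \<in> e i)"
  have ra: "rp 1 (\<lambda>xs. a (xs!0))"
    using rp_of1[OF assms(11)[unfolded recursive_lang_def]] unfolding rp_def a_def by simp
  have rcc: "rp 1 (\<lambda>xs. c (xs!0))"
    using rp_of1[OF assms(10)[unfolded recursive_lang_def]] unfolding rp_def c_def by simp
  have rE: "rp 2 (\<lambda>xs. E (xs!0) (xs!1))"
    using rp_of2[OF e_comp] unfolding rp_def E_def by simp
  have good_iff: "(\<forall>x. c x \<longrightarrow> E i x) \<longleftrightarrow> C \<subseteq> e i" for i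
  proof
    assume h: "\<forall>x. c x \<longrightarrow> E i x"
    show "C \<subseteq> e i"
    proof
      fix w assume "w \<in> C"
      then have "c (list_encode w)" unfolding c_def by simp
      then show "w \<in> e i" using h unfolding E_def by (metis list_encode_inverse)
    qed
  next
    assume "C \<subseteq> e i"
    then show "\<forall>x. c x \<longrightarrow> E i x" unfolding c_def E_def by blast
  qed
  have wL: "words k \<in> \<L>" and eL: "\<And>i. e i \<in> \<L>"
    using assms(3) e_range unfolding nontrivial_def by auto
  define Q where "Q = (\<lambda>n. words k \<inter> {w. \<forall>i\<le>n. C \<subseteq> e i \<longrightarrow> w \<in> e i})"
  have QL: "Q n \<in> \<L>" for n
  proof (induction n)
    case 0
    have "Q 0 = (if C \<subseteq> e 0 then words k \<inter> e 0 else words k)" unfolding Q_def by auto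
    then show ?case using wL eL assms(6) by simp
  next
    case (Suc n)
    have "Q (Suc n) = (if C \<subseteq> e (Suc n) then Q n \<inter> e (Suc n) else Q n)"
      unfolding Q_def by (auto simp: le_Suc_eq)
    then show ?case using Suc eL assms(6) by simp
  qed
  have AQ: "infinite (A \<inter> Q n)" for n
  proof
    assume fin: "finite (A \<inter> Q n)"
    define Q' where "Q' = Q n - A \<inter> Q n"
    have nt: "\<forall>Q\<in>\<L>. \<forall>E. finite E \<and> E \<subseteq> words k \<longrightarrow> Q \<union> E \<in> \<L> \<and> Q - E \<in> \<L>"
      using assms(3) unfolding nontrivial_def by blast
    have "A \<inter> Q n \<subseteq> words k" using assms(9) by blast
    then have Q'L: "Q' \<in> \<L>"
      using nt[rule_format, OF QL[of n], of "A \<inter> Q n"] fin unfolding Q'_def by blast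
    have "C \<subseteq> Q'" using assms(8,13) unfolding Q'_def Q_def by auto
    moreover have "A \<subseteq> words k - Q'" using assms(9) unfolding Q'_def by auto
    moreover have "words k - Q' \<in> \<L>" using assms(7) Q'L by blast
    moreover have "A \<subseteq> words k - C" using assms(9,13) by blast
    ultimately have "A \<in> cclass1 k C \<L>"
      unfolding cclass1_def mem_Collect_eq using assms(12) Q'L by (intro conjI bexI[of _ Q']) auto
    then show False using assms(14) by blast
  qed
  have inf: "infinite {w. a w \<and> (\<forall>i\<le>n. (\<forall>x. c x \<longrightarrow> E i x) \<longrightarrow> E i w)}" for n
  proof
    assume fin: "finite {w. a w \<and> (\<forall>i\<le>n. (\<forall>x. c x \<longrightarrow> E i x) \<longrightarrow> E i w)}"
    have "A \<inter> Q n \<subseteq> list_decode ` {w. a w \<and> (\<forall>i\<le>n. (\<forall>x. c x \<longrightarrow> E i x) \<longrightarrow> E i w)}"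
    proof
      fix v assume v: "v \<in> A \<inter> Q n"
      have "\<forall>i\<le>n. (\<forall>x. c x \<longrightarrow> E i x) \<longrightarrow> E i (list_encode v)"
      proof (intro allI impI)
        fix i assume i: "i \<le> n" "\<forall>x. c x \<longrightarrow> E i x"
        then have "C \<subseteq> e i" using good_iff by blast
        then show "E i (list_encode v)" using v i(1) unfolding Q_def E_def by simp
      qed
      moreover have "a (list_encode v)" using v unfolding a_def by simp
      ultimately have enc: "list_encode v \<in> {w. a w \<and> (\<forall>i\<le>n. (\<forall>x. c x \<longrightarrow> E i x) \<longrightarrow> E i w)}"
        by blast
      show "v \<in> list_decode ` {w. a w \<and> (\<forall>i\<le>n. (\<forall>x. c x \<longrightarrow> E i x) \<longrightarrow> E i w)}"
        by (rule image_eqI[where x="list_encode v", OF _ enc]) simp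
    qed
    then have "finite (A \<inter> Q n)" by (rule finite_subset[OF _ finite_imageI[OF fin]])
    then show False using AQ[of n] by blast
  qed
  interpret constr a c E .
  define B where "B = list_decode ` range bs"
  have inj: "inj list_decode" using inj_list_decode by blast
  have BA: "B \<subseteq> A" unfolding B_def using bs_a[OF inf] a_def by auto
  have rec: "recursive_lang B"
  proof -
    obtain r where r: "\<forall>xs. length xs = 1 \<longrightarrow> eval r xs (if xs!0 \<in> range bs then 1 else 0)"
      using rp_range[OF inf ra rcc rE] unfolding rp_def rc_def by blast
    have "eval r [x] (if list_decode x \<in> B then 1 else 0)" for x
      using r[rule_format, of "[x]"] unfolding B_def inj_image_mem_iff[OF inj] by simp
    then show ?thesis unfolding recursive_lang_def computable1_def by blast
  qed
  have Binf: "infinite B"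
  proof -
    have "inj bs" using bs_smono[OF inf] strict_mono_imp_inj_on by blast
    then have "infinite (range bs)" using range_inj_infinite by blast
    then show ?thesis unfolding B_def using finite_imageD[OF _ inj_on_subset[OF inj subset_UNIV]] by blast
  qed
  have "B \<in> ccore1 k C \<L>"
    unfolding ccore1_def
  proof (intro CollectI conjI allI impI Binf)
    show "B \<subseteq> words k - C" using BA assms(9,13) by blast
    fix B' assume B': "B' \<subseteq> B \<and> infinite B'"
    show "B' \<notin> cclass1 k C \<L>"
    proof
      assume "B' \<in> cclass1 k C \<L>"
      then obtain Q0 where "Q0 \<in> \<L>" "C \<subseteq> Q0" "B' \<subseteq> words k - Q0"
        unfolding cclass1_def by blast
      then obtain i where i: "Q0 = e i" "C \<subseteq> e i" using e_range by blast
      have "B' \<subseteq> list_decode ` bs ` {..<i}"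
      proof
        fix v assume v: "v \<in> B'"
        then obtain m where m: "v = list_decode (bs m)" using B' unfolding B_def by blast
        have "m < i"
        proof (rule ccontr)
          assume "\<not> m < i"
          then have "E i (bs m)" using bs_E[OF inf] good_iff i by auto
          then show False using m v i \<open>B' \<subseteq> words k - Q0\<close> E_def by blast
        qed
        show "v \<in> list_decode ` bs ` {..<i}" using m \<open>m < i\<close> by blast
      qed
      then have "finite B'" by (rule finite_subset) simp
      then show False using B' by blast
    qed
  qed
  then show ?thesis using BA rec by blast
qed

end
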